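(* Let $(\curlywedge,\curlyvee)$ be the reference pair of a Morse sequence $W$ on a finite simplicial complex $K$, and let $\widehat{W}$ denote the set of simplices that are critical for $W$. If $\kappa \in \widehat{W}$ and $\nu \in K$, then: (1) $\kappa \in \curlywedge(\nu)$ if and only if there exists a $\curlywedge$-path from $\nu$ to $\kappa$; (2) $\kappa \in \curlyvee(\nu)$ if and only if there exists a $\curlyvee$-path from $\kappa$ to $\nu$.
   Context: $K$ is a finite simplicial complex; chains are taken with $\mathbb{Z}_2$ coefficients, so a $p$-chain is a set of $p$-simplices and sums are symmetric differences. For a $p$-simplex $\sigma$, $\partial(\sigma)$ is the set of its $(p-1)$-faces and $\delta(\sigma)$ is the set of $(p+1)$-simplices of $K$ containing $\sigma$; these extend linearly to chains. A Morse sequence $W=\langle \emptyset=K_0,\ldots,K_k=K\rangle$ is a sequence of simplicial complexes in which each $K_i$ is obtained from $K_{i-1}$ either by an elementary filling (adding one simplex $\nu$ that is a facet of $K_i$; then $\nu$ is called critical) or by an elementary expansion (adding $\sigma\subset\tau$ with $\dim\tau=\dim\sigma+1$, where $(\sigma,\tau)$ is a free pair of $K_i$, i.e. $\tau$ is the only face of $K_i$ containing $\sigma$; then $(\sigma,\tau)$ is a regular pair, $\sigma$ is lower regular and $\tau$ is upper regular). $\widehat{W}$ is the set of critical simplices. The reference map $\curlywedge$ and coreference map $\curlyvee$ are the unique maps assigning to each $p$-simplex of $K$ a set (a $\mathbb{Z}_2$-chain) of critical $p$-simplices, extended linearly to chains, such that $\curlywedge(\nu)=\curlyvee(\nu)=\nu$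 for every critical $\nu$; for every upper regular $\tau$, $\curlywedge(\tau)=0$ and $\curlywedge(\partial(\tau))=0$; and for every lower regular $\sigma$, $\curlyvee(\sigma)=0$ and $\curlyvee(\delta(\sigma))=0$. The pair $(\curlywedge,\curlyvee)$ is called the reference pair of $W$. A gradient path in $W$ from $\sigma_0$ to $\sigma_k$ is a sequence $\langle\sigma_0,\tau_0,\ldots,\sigma_{k-1},\tau_{k-1},\sigma_k\rangle$ ($k\ge 0$) of $p$-simplices $\sigma_i$ and $(p+1)$-simplices $\tau_i$ such that each $(\sigma_i,\tau_i)$ is a regular pair of $W$ and $\sigma_{i+1}\in\partial(\tau_i)$ with $\sigma_{i+1}\neq\sigma_i$. A cogradient path in $W$ from $\tau_0$ to $\tau_k$ is a sequence $\langle\tau_0,\sigma_1,\tau_1,\ldots,\sigma_k,\tau_k\rangle$ ($k\ge0$) of $p$-simplices $\tau_i$ and $(p-1)$-simplices $\sigma_i$ such that each $(\sigma_i,\tau_i)$ is a regular pair of $W$ and $\tau_{i-1}\in\delta(\sigma_i)$ with $\tau_i\neq\tau_{i-1}$. A $\curlywedge$-path is a gradient path $\langle\sigma_0,\tau_0,\ldots,\tau_{k-1},\sigma_k\rangle$ such that $\sigma_k\in\curlywedge(\sigma_i)$ for every $i\in[0,k]$. A $\curlyvee$-path is a cogradient path $\langle\tau_0,\sigma_1,\tau_1,\ldots,\sigma_k,\tau_k\rangle$ such that $\tau_0\in\curlyvee(\tau_i)$ for every $i\in[0,k]$. *)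

theory Defs
  imports Main
begin

text \<open>Simplices are finite nonempty vertex sets; a p-simplex has p+1 vertices.
  Chains over Z2 are sets of simplices.\<close>

definition simplicial_complex :: "'a set set \<Rightarrow> bool" where
  "simplicial_complex K \<longleftrightarrow> finite K \<and>
     (\<forall>\<sigma>\<in>K. finite \<sigma> \<and> \<sigma> \<noteq> {}) \<and>
     (\<forall>\<sigma>\<in>K. \<forall>\<tau>. \<tau> \<subseteq> \<sigma> \<and> \<tau> \<noteq> {} \<longrightarrow> \<tau> \<in> K)"

definition bd :: "'a set \<Rightarrow> 'a set set" where
  "bd \<sigma> = {\<sigma> - {v} | v. v \<in> \<sigma> \<and> card \<sigma> \<ge> 2}"

definition cobd :: "'a set set \<Rightarrow> 'a set \<Rightarrow> 'a set set" where
  "cobd K \<sigma> = {\<tau> \<in> K. \<sigma> \<subseteq> \<tau> \<and> card \<tau> = card \<sigma> + 1}"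

text \<open>Linear (Z2) extension of a map from simplices to chains, applied to a chain.\<close>
definition chain_map :: "('a set \<Rightarrow> 'a set set) \<Rightarrow> 'a set set \<Rightarrow> 'a set set" where
  "chain_map f c = {\<kappa>. odd (card {\<sigma> \<in> c. \<kappa> \<in> f \<sigma>})}"

datatype 'a step = Fill "'a set" | Expand "'a set" "'a set"

fun step_simplices :: "'a step \<Rightarrow> 'a set set" where
  "step_simplices (Fill \<nu>) = {\<nu>}"
| "step_simplices (Expand \<sigma> \<tau>) = {\<sigma>, \<tau>}"

definition cpx :: "'a step list \<Rightarrow> nat \<Rightarrow> 'a set set" where
  "cpx W i = (\<Union>s\<in>set (take i W). step_simplices s)"

definition valid_step :: "'a set set \<Rightarrow> 'a set set \<Rightarrow> 'a step \<Rightarrow> bool" where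
  "valid_step Kprev Knew s = (case s of
      Fill \<nu> \<Rightarrow> \<nu> \<notin> Kprev \<and> (\<forall>\<rho>\<in>Knew. \<not> \<nu> \<subset> \<rho>)
    | Expand \<sigma> \<tau> \<Rightarrow> \<sigma> \<subset> \<tau> \<and> card \<tau> = card \<sigma> + 1 \<and> \<sigma> \<notin> Kprev \<and> \<tau> \<notin> Kprev
        \<and> (\<forall>\<rho>\<in>Knew. \<sigma> \<subset> \<rho> \<longrightarrow> \<rho> = \<tau>))"

definition morse_sequence :: "'a set set \<Rightarrow> 'a step list \<Rightarrow> bool" where
  "morse_sequence K W \<longleftrightarrow> simplicial_complex K \<and> cpx W (length W) = K \<and>
     (\<forall>i<length W. simplicial_complex (cpx W (Suc i)) \<and>
                   valid_step (cpx W i) (cpx W (Suc i)) (W ! i))"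

definition critical :: "'a step list \<Rightarrow> 'a set set" where
  "critical W = {\<nu>. Fill \<nu> \<in> set W}"

definition regular_pair :: "'a step list \<Rightarrow> 'a set \<Rightarrow> 'a set \<Rightarrow> bool" where
  "regular_pair W \<sigma> \<tau> \<longleftrightarrow> Expand \<sigma> \<tau> \<in> set W"

definition upper_regular :: "'a step list \<Rightarrow> 'a set set" where
  "upper_regular W = {\<tau>. \<exists>\<sigma>. regular_pair W \<sigma> \<tau>}"

definition lower_regular :: "'a step list \<Rightarrow> 'a set set" where
  "lower_regular W = {\<sigma>. \<exists>\<tau>. regular_pair W \<sigma> \<tau>}"

definition crit_valued :: "'a set set \<Rightarrow> 'a step list \<Rightarrow> ('a set \<Rightarrow> 'a set set) \<Rightarrow> bool" where
  "crit_valued K W r \<longleftrightarrow> (\<forall>\<nu>\<in>K. r \<nu> \<subseteq> critical W \<and> (\<forall>\<kappa>\<in>r \<nu>. card \<kappa> = card \<nu>))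
     \<and> (\<forall>\<nu>\<in>critical W. r \<nu> = {\<nu>})"

definition reference_map :: "'a set set \<Rightarrow> 'a step list \<Rightarrow> ('a set \<Rightarrow> 'a set set) \<Rightarrow> bool" where
  "reference_map K W r \<longleftrightarrow> crit_valued K W r \<and>
     (\<forall>\<tau>\<in>upper_regular W. r \<tau> = {} \<and> chain_map r (bd \<tau>) = {})"

definition coreference_map :: "'a set set \<Rightarrow> 'a step list \<Rightarrow> ('a set \<Rightarrow> 'a set set) \<Rightarrow> bool" where
  "coreference_map K W r \<longleftrightarrow> crit_valued K W r \<and>
     (\<forall>\<sigma>\<in>lower_regular W. r \<sigma> = {} \<and> chain_map r (cobd K \<sigma>) = {})"

text \<open>Gradient path <ss!0, ts!0, ss!1, ..., ts!(k-1), ss!k>.\<close>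
definition gradient_path :: "'a step list \<Rightarrow> 'a set list \<Rightarrow> 'a set list \<Rightarrow> bool" where
  "gradient_path W ss ts \<longleftrightarrow> length ss = Suc (length ts) \<and>
     (\<forall>i<length ts. regular_pair W (ss ! i) (ts ! i) \<and> ss ! Suc i \<in> bd (ts ! i)
                    \<and> ss ! Suc i \<noteq> ss ! i)"

text \<open>Cogradient path <ts!0, ss!0, ts!1, ..., ss!(k-1), ts!k>; ss!i is sigma_(i+1).\<close>
definition cogradient_path :: "'a set set \<Rightarrow> 'a step list \<Rightarrow> 'a set list \<Rightarrow> 'a set list \<Rightarrow> bool" where
  "cogradient_path K W ts ss \<longleftrightarrow> length ts = Suc (length ss) \<and>
     (\<forall>i<length ss. regular_pair W (ss ! i) (ts ! Suc i) \<and> ts ! i \<in> cobd K (ss ! i)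
                    \<and> ts ! Suc i \<noteq> ts ! i)"

definition ref_path :: "'a step list \<Rightarrow> ('a set \<Rightarrow> 'a set set) \<Rightarrow> 'a set \<Rightarrow> 'a set \<Rightarrow> bool" where
  "ref_path W r \<nu> \<kappa> \<longleftrightarrow> (\<exists>ss ts. gradient_path W ss ts \<and> hd ss = \<nu> \<and> last ss = \<kappa>
       \<and> (\<forall>\<sigma>\<in>set ss. \<kappa> \<in> r \<sigma>))"

definition coref_path :: "'a set set \<Rightarrow> 'a step list \<Rightarrow> ('a set \<Rightarrow> 'a set set) \<Rightarrow> 'a set \<Rightarrow> 'a set \<Rightarrow> bool" where
  "coref_path K W r \<kappa> \<nu> \<longleftrightarrow> (\<exists>ts ss. cogradient_path K W ts ss \<and> hd ts = \<kappa> \<and> last ts = \<nu>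
       \<and> (\<forall>\<tau>\<in>set ts. \<kappa> \<in> r \<tau>))"

end

theory Submission
  imports Defs
begin

lemma cpx_mono: "i \<le> j \<Longrightarrow> cpx W i \<subseteq> cpx W j"
  unfolding cpx_def using set_take_subset_set_take by fastforce

lemma cpx_Suc: "i < length W \<Longrightarrow> cpx W (Suc i) = cpx W i \<union> step_simplices (W ! i)"
  unfolding cpx_def by (auto simp add: take_Suc_conv_app_nth)

lemma cpx_sub: "cpx W n \<subseteq> cpx W (length W)"
  unfolding cpx_def using set_take_subset by fastforce

lemma bd_mem:
  assumes "finite \<tau>" "\<sigma> \<subset> \<tau>" "card \<tau> = card \<sigma> + 1" "\<sigma> \<noteq> {}"
  shows "\<sigma> \<in> bd \<tau>"
proof -
  obtain v where v: "v \<in> \<tau>" "v \<notin> \<sigma>" using assms(2) by blast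
  have s: "\<sigma> \<subseteq> \<tau> - {v}" using assms(2) v by blast
  have c: "card (\<tau> - {v}) = card \<sigma>" using assms(1,3) v by simp
  have e: "\<sigma> = \<tau> - {v}" using card_subset_eq[OF _ s] c assms(1) by simp
  have fs: "finite \<sigma>" using assms(1,2) finite_subset by blast
  then have "card \<sigma> \<noteq> 0" using assms(4) by simp
  then have "card \<tau> \<ge> 2" using assms(3) by simp
  then have "v \<in> \<tau> \<and> card \<tau> \<ge> 2 \<and> \<sigma> = \<tau> - {v}" using v e by blast
  then show ?thesis unfolding bd_def by blast
qed

lemma bd_props:
  assumes "\<sigma> \<in> bd \<tau>"
  shows "\<sigma> \<subseteq> \<tau>" "\<sigma> \<noteq> \<tau>" "\<sigma> \<noteq> {}"
proof -
  obtain v where v: "\<sigma> = \<tau> - {v}" "v \<in> \<tau>" "card \<tau> \<ge> 2" using assms unfolding bd_def by auto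
  then have f: "finite \<tau>" by (metis card.infinite not_numeral_le_zero)
  show "\<sigma> \<subseteq> \<tau>" "\<sigma> \<noteq> \<tau>" using v by auto
  have "card \<sigma> = card \<tau> - 1" using v f by simp
  then show "\<sigma> \<noteq> {}" using v(3) by auto
qed

lemma bd_finite: "finite \<tau> \<Longrightarrow> finite (bd \<tau>)"
proof -
  assume "finite \<tau>"
  have "bd \<tau> \<subseteq> (\<lambda>v. \<tau> - {v}) ` \<tau>" unfolding bd_def by auto
  then show ?thesis using \<open>finite \<tau>\<close> finite_subset by blast
qed

lemma parity_other:
  assumes "finite A" "x \<in> A" "even (card A)"
  shows "\<exists>y\<in>A. y \<noteq> x"
proof (rule ccontr)
  assume "\<not> ?thesis"
  then have "A = {x}" using assms(2) by blast
  then have "card A = 1" by simp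
  then show False using assms(3) by (metis odd_one)
qed

lemma chain_zero: "chain_map r c = {} \<Longrightarrow> even (card {\<sigma> \<in> c. \<kappa> \<in> r \<sigma>})"
  unfolding chain_map_def by blast

lemma cases_K:
  assumes "morse_sequence K W" "\<nu> \<in> K"
  shows "\<nu> \<in> critical W \<or> (\<exists>\<tau>. Expand \<nu> \<tau> \<in> set W) \<or> (\<exists>\<sigma>. Expand \<sigma> \<nu> \<in> set W)"
proof -
  have "\<nu> \<in> cpx W (length W)" using assms unfolding morse_sequence_def by auto
  then obtain s where s: "s \<in> set W" "\<nu> \<in> step_simplices s" unfolding cpx_def by auto
  show ?thesis
  proof (cases s)
    case (Fill x)
    then show ?thesis using s unfolding critical_def by simp
  next
    case (Expand x y)
    then have "\<nu> = x \<or> \<nu> = y" using s by simp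
    then show ?thesis using s Expand by blast
  qed
qed

lemma expand_idx:
  assumes "Expand \<sigma> \<tau> \<in> set W"
  obtains i where "i < length W" "W ! i = Expand \<sigma> \<tau>"
  using assms by (metis in_set_conv_nth)

lemma part1:
  assumes ms: "morse_sequence K W" and rm: "reference_map K W up"
    and kc: "\<kappa> \<in> critical W"
  shows "\<nu> \<in> cpx W n \<Longrightarrow> \<kappa> \<in> up \<nu> \<Longrightarrow> ref_path W up \<nu> \<kappa>"
proof (induction n arbitrary: \<nu> rule: less_induct)
  case (less n)
  have sc: "simplicial_complex K" and KW: "cpx W (length W) = K" using ms unfolding morse_sequence_def by auto
  have nuK: "\<nu> \<in> K" using less.prems(1) cpx_sub KW by blast
  have cv: "crit_valued K W up" using rm unfolding reference_map_def by auto
  consider (c) "\<nu> \<in> critical W" | (l) \<tau> where "Expand \<nu> \<tau> \<in> set W" | (u) \<sigma> where "Expand \<sigma> \<nu> \<in> set W"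
    using cases_K[OF ms nuK] by blast
  then show ?case
  proof cases
    case c
    then have "\<kappa> = \<nu>" using cv less.prems(2) unfolding crit_valued_def by auto
    then show ?thesis unfolding ref_path_def gradient_path_def using less.prems(2)
      by (intro exI[of _ "[\<nu>]"] exI[of _ "[]"]) auto
  next
    case u
    then have "up \<nu> = {}" using rm unfolding reference_map_def upper_regular_def regular_pair_def by auto
    then show ?thesis using less.prems(2) by auto
  next
    case l
    obtain i where i: "i < length W" "W ! i = Expand \<nu> \<tau>" using expand_idx[OF l] by blast
    have vs: "valid_step (cpx W i) (cpx W (Suc i)) (W ! i)" and scS: "simplicial_complex (cpx W (Suc i))"
      using ms i unfolding morse_sequence_def by auto
    then have vs': "\<nu> \<subset> \<tau>" "card \<tau> = card \<nu> + 1" "\<nu> \<notin> cpx W i" "\<tau> \<notin> cpx W i"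
      using i unfolding valid_step_def by auto
    have cS: "cpx W (Suc i) = cpx W i \<union> {\<nu>, \<tau>}" using cpx_Suc[OF i(1)] i(2) by simp
    have tK: "\<tau> \<in> cpx W (Suc i)" using cS by auto
    have tKK: "\<tau> \<in> K" using tK cpx_sub KW by blast
    have scK: "\<forall>\<sigma>\<in>K. finite \<sigma> \<and> \<sigma> \<noteq> {}" using sc unfolding simplicial_complex_def by blast
    have ft: "finite \<tau>" "\<nu> \<noteq> {}" using scK tKK nuK by auto
    have nub: "\<nu> \<in> bd \<tau>" using bd_mem[OF ft(1) vs'(1,2) ft(2)] .
    have "chain_map up (bd \<tau>) = {}" using rm l unfolding reference_map_def upper_regular_def regular_pair_def by auto
    then have ev: "even (card {\<sigma> \<in> bd \<tau>. \<kappa> \<in> up \<sigma>})" by (rule chain_zero)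
    obtain \<sigma>' where s': "\<sigma>' \<in> bd \<tau>" "\<kappa> \<in> up \<sigma>'" "\<sigma>' \<noteq> \<nu>"
      using parity_other[OF _ _ ev, of \<nu>] bd_finite[OF ft(1)] nub less.prems(2) by auto
    have clo: "\<forall>\<rho>\<in>cpx W (Suc i). \<forall>t. t \<subseteq> \<rho> \<and> t \<noteq> {} \<longrightarrow> t \<in> cpx W (Suc i)"
      using scS unfolding simplicial_complex_def by blast
    have "\<sigma>' \<subseteq> \<tau> \<and> \<sigma>' \<noteq> {}" using bd_props[OF s'(1)] by blast
    then have "\<sigma>' \<in> cpx W (Suc i)" using clo tK by blast
    then have s'i: "\<sigma>' \<in> cpx W i" using cS s'(3) bd_props(2)[OF s'(1)] by auto
    have "i < n"
    proof (rule ccontr)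
      assume "\<not> i < n"
      then have "cpx W n \<subseteq> cpx W i" using cpx_mono[of n i W] by auto
      then show False using less.prems(1) vs'(3) by auto
    qed
    from less.IH[OF this s'i s'(2)] obtain ss ts where
      p: "gradient_path W ss ts" "hd ss = \<sigma>'" "last ss = \<kappa>" "\<forall>\<sigma>\<in>set ss. \<kappa> \<in> up \<sigma>"
      unfolding ref_path_def by blast
    have ne: "ss \<noteq> []" using p(1) unfolding gradient_path_def by auto
    have lss: "length ss = Suc (length ts)" and
      pp: "\<forall>i<length ts. regular_pair W (ss ! i) (ts ! i) \<and> ss ! Suc i \<in> bd (ts ! i) \<and> ss ! Suc i \<noteq> ss ! i"
      using p(1) unfolding gradient_path_def by auto
    have "gradient_path W (\<nu> # ss) (\<tau> # ts)"
      unfolding gradient_path_def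
    proof (rule conjI)
      show "length (\<nu> # ss) = Suc (length (\<tau> # ts))" using lss by simp
    next
      show "\<forall>j<length (\<tau> # ts). regular_pair W ((\<nu> # ss) ! j) ((\<tau> # ts) ! j) \<and> (\<nu> # ss) ! Suc j \<in> bd ((\<tau> # ts) ! j) \<and> (\<nu> # ss) ! Suc j \<noteq> (\<nu> # ss) ! j"
      proof (intro allI impI)
        fix j assume j: "j < length (\<tau> # ts)"
        show "regular_pair W ((\<nu> # ss) ! j) ((\<tau> # ts) ! j) \<and> (\<nu> # ss) ! Suc j \<in> bd ((\<tau> # ts) ! j) \<and> (\<nu> # ss) ! Suc j \<noteq> (\<nu> # ss) ! j"
        proof (cases j)
          case 0
          have "ss ! 0 = \<sigma>'" using p(2) ne by (simp add: hd_conv_nth)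
          then show ?thesis using 0 l s' unfolding regular_pair_def by simp
        next
          case (Suc j')
          then have "j' < length ts" using j by simp
          then show ?thesis using pp Suc by simp
        qed
      qed
    qed
    then show ?thesis unfolding ref_path_def using p ne less.prems(2)
      by (intro exI[of _ "\<nu> # ss"] exI[of _ "\<tau> # ts"]) auto
  qed
qed


lemma part2:
  assumes ms: "morse_sequence K W" and rm: "coreference_map K W down"
    and kc: "\<kappa> \<in> critical W"
  shows "length W - i = m \<Longrightarrow> \<nu> \<in> K \<Longrightarrow> \<nu> \<notin> cpx W i \<Longrightarrow> \<kappa> \<in> down \<nu> \<Longrightarrow> coref_path K W down \<kappa> \<nu>"
proof (induction m arbitrary: \<nu> i rule: less_induct)
  case (less m)
  have sc: "simplicial_complex K" and KW: "cpx W (length W) = K" using ms unfolding morse_sequence_def by auto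
  have nuK: "\<nu> \<in> K" using less.prems(2) .
  have cv: "crit_valued K W down" using rm unfolding coreference_map_def by auto
  consider (c) "\<nu> \<in> critical W" | (l) \<tau> where "Expand \<nu> \<tau> \<in> set W" | (u) \<sigma> where "Expand \<sigma> \<nu> \<in> set W"
    using cases_K[OF ms nuK] by blast
  then show ?case
  proof cases
    case c
    then have "\<kappa> = \<nu>" using cv less.prems(4) unfolding crit_valued_def by auto
    then show ?thesis unfolding coref_path_def cogradient_path_def using less.prems(4)
      by (intro exI[of _ "[\<nu>]"] exI[of _ "[]"]) auto
  next
    case l
    then have "down \<nu> = {}" using rm unfolding coreference_map_def lower_regular_def regular_pair_def by auto
    then show ?thesis using less.prems(4) by auto
  next
    case u
    obtain i0 where i: "i0 < length W" "W ! i0 = Expand \<sigma> \<nu>" using expand_idx[OF u] by blast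
    have vs: "valid_step (cpx W i0) (cpx W (Suc i0)) (W ! i0)"
      using ms i unfolding morse_sequence_def by auto
    then have vs': "\<sigma> \<subset> \<nu>" "card \<nu> = card \<sigma> + 1" "\<forall>\<rho>\<in>cpx W (Suc i0). \<sigma> \<subset> \<rho> \<longrightarrow> \<rho> = \<nu>"
      using i unfolding valid_step_def by auto
    have cS: "cpx W (Suc i0) = cpx W i0 \<union> {\<sigma>, \<nu>}" using cpx_Suc[OF i(1)] i(2) by simp
    have nub: "\<nu> \<in> cobd K \<sigma>" unfolding cobd_def using nuK vs' by auto
    have "chain_map down (cobd K \<sigma>) = {}" using rm u unfolding coreference_map_def lower_regular_def regular_pair_def by auto
    then have ev: "even (card {\<tau> \<in> cobd K \<sigma>. \<kappa> \<in> down \<tau>})" by (rule chain_zero)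
    have fc: "finite (cobd K \<sigma>)" using sc unfolding simplicial_complex_def cobd_def by auto
    obtain \<tau>' where t': "\<tau>' \<in> cobd K \<sigma>" "\<kappa> \<in> down \<tau>'" "\<tau>' \<noteq> \<nu>"
      using parity_other[OF _ _ ev, of \<nu>] fc nub less.prems(4) by auto
    have t'K: "\<tau>' \<in> K" and sst: "\<sigma> \<subset> \<tau>'" using t'(1) unfolding cobd_def by auto
    have t'n: "\<tau>' \<notin> cpx W (Suc i0)" using vs'(3) sst t'(3) by blast
    have "i \<le> i0"
    proof (rule ccontr)
      assume "\<not> i \<le> i0"
      then have "cpx W (Suc i0) \<subseteq> cpx W i" using cpx_mono[of "Suc i0" i W] by auto
      then show False using less.prems(3) cS by auto
    qed
    then have lt: "length W - Suc i0 < m" using less.prems(1) i(1) by auto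
    from less.IH[OF lt refl t'K t'n t'(2)] obtain ts ss where
      p: "cogradient_path K W ts ss" "hd ts = \<kappa>" "last ts = \<tau>'" "\<forall>\<tau>\<in>set ts. \<kappa> \<in> down \<tau>"
      unfolding coref_path_def by blast
    have ne: "ts \<noteq> []" and len: "length ts = Suc (length ss)" using p(1) unfolding cogradient_path_def by auto
    have lastn: "ts ! length ss = \<tau>'" using p(3) ne len by (simp add: last_conv_nth)
    have "cogradient_path K W (ts @ [\<nu>]) (ss @ [\<sigma>])"
      unfolding cogradient_path_def
    proof (rule conjI)
      show "length (ts @ [\<nu>]) = Suc (length (ss @ [\<sigma>]))" using len by simp
    next
      show "\<forall>j<length (ss @ [\<sigma>]). regular_pair W ((ss @ [\<sigma>]) ! j) ((ts @ [\<nu>]) ! Suc j) \<and> (ts @ [\<nu>]) ! j \<in> cobd K ((ss @ [\<sigma>]) ! j) \<and> (ts @ [\<nu>]) ! Suc j \<noteq> (ts @ [\<nu>]) ! j"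
      proof (intro allI impI)
      fix j assume j: "j < length (ss @ [\<sigma>])"
      show "regular_pair W ((ss @ [\<sigma>]) ! j) ((ts @ [\<nu>]) ! Suc j) \<and> (ts @ [\<nu>]) ! j \<in> cobd K ((ss @ [\<sigma>]) ! j) \<and> (ts @ [\<nu>]) ! Suc j \<noteq> (ts @ [\<nu>]) ! j"
      proof (cases "j < length ss")
        case True
        then show ?thesis using p(1) len unfolding cogradient_path_def by (auto simp: nth_append)
      next
        case False
        then have "j = length ss" using j by simp
        then show ?thesis using len lastn u t' unfolding regular_pair_def by (auto simp: nth_append)
      qed
    qed
    qed
    then show ?thesis unfolding coref_path_def using p ne less.prems(4)
      by (intro exI[of _ "ts @ [\<nu>]"] exI[of _ "ss @ [\<sigma>]"]) auto
  qed
qed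

theorem corollary1:
  fixes K :: "'a set set" and W :: "'a step list"
    and up down :: "'a set \<Rightarrow> 'a set set"
  assumes "morse_sequence K W"
    and "reference_map K W up"
    and "coreference_map K W down"
    and "\<kappa> \<in> critical W"
    and "\<nu> \<in> K"
  shows "(\<kappa> \<in> up \<nu> \<longleftrightarrow> ref_path W up \<nu> \<kappa>) \<and>
         (\<kappa> \<in> down \<nu> \<longleftrightarrow> coref_path K W down \<kappa> \<nu>)"
proof (intro conjI iffI)
  have KW: "cpx W (length W) = K" using assms(1) unfolding morse_sequence_def by auto
  show "ref_path W up \<nu> \<kappa>" if "\<kappa> \<in> up \<nu>"
    using part1[OF assms(1,2,4), of \<nu> "length W"] KW assms(5) that by auto
  show "\<kappa> \<in> up \<nu>" if "ref_path W up \<nu> \<kappa>"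
    using that unfolding ref_path_def gradient_path_def by (metis hd_in_set length_greater_0_conv zero_less_Suc)
  have h0: "cpx W 0 = {}" unfolding cpx_def by simp
  show "coref_path K W down \<kappa> \<nu>" if "\<kappa> \<in> down \<nu>"
    using h0 part2[OF assms(1,3,4) refl assms(5), where i=0] that by auto
  show "\<kappa> \<in> down \<nu>" if "coref_path K W down \<kappa> \<nu>"
    using that unfolding coref_path_def cogradient_path_def by (metis last_in_set length_greater_0_conv zero_less_Suc)
qed

end
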